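(* Define $\tau,\tau^<\colon\mathbb{D}([0,\infty),\mathbb{R})\to[0,\infty]$ by $\tau(f)=\inf\{t\ge0\colon f(t)\le0\}$ and $\tau^<(f)=\inf\{t\ge0\colon f(t)<0\}$. Let $C([0,\infty),\mathbb{R})$ be the set of continuous $f\in\mathbb{D}([0,\infty),\mathbb{R})$ and $$\mathbb{D}^*([0,\infty),\mathbb{R})=\big\{f\in\mathbb{D}([0,\infty),\mathbb{R})\colon f(t)\le0\ \forall t\ge\tau(f),\ \tau^<(f)=\tau(f)<\infty\big\}.$$ If $f_n\to f$ in $\mathbb{D}([0,\infty),\mathbb{R})$ (Skorokhod topology) and $f\in C([0,\infty),\mathbb{R})\cap\mathbb{D}^*([0,\infty),\mathbb{R})$, then $\tau(f_n)\to\tau(f)$.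
   Context: $\mathbb{D}([0,\infty),\mathbb{R})$ is the space of càdlàg functions $[0,\infty)\to\mathbb{R}$ with the Skorokhod ($J_1$) topology, $\inf\varnothing=\infty$. *)

theory Defs
  imports "HOL-Analysis.Analysis" "HOL-Library.Extended_Real"
begin

text \<open>Paths are functions real => real; only their values on [0,oo) matter.\<close>

definition cadlag :: "(real \<Rightarrow> real) \<Rightarrow> bool" where
  "cadlag f \<longleftrightarrow>
     (\<forall>t\<ge>0. continuous (at_right t) f) \<and>
     (\<forall>t>0. \<exists>l. (f \<longlongrightarrow> l) (at_left t))"

definition time_change :: "(real \<Rightarrow> real) \<Rightarrow> bool" where
  "time_change g \<longleftrightarrow>
     strict_mono_on {0..} g \<and> continuous_on {0..} g \<and> bij_betw g {0..} {0..}"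

text \<open>Convergence in the Skorokhod J1 topology on D([0,oo),R)
  (Ethier--Kurtz, Prop. 3.5.3): there are time changes lambda_n with
  sup_{t<=T} |lambda_n t - t| -> 0 and sup_{t<=T} |f_n (lambda_n t) - f t| -> 0
  for every T (stated as uniform convergence on [0,T]).\<close>
definition skorokhod_conv :: "(nat \<Rightarrow> real \<Rightarrow> real) \<Rightarrow> (real \<Rightarrow> real) \<Rightarrow> bool" where
  "skorokhod_conv fs f \<longleftrightarrow>
     (\<forall>n. cadlag (fs n)) \<and> cadlag f \<and>
     (\<exists>lam. (\<forall>n. time_change (lam n)) \<and>
        (\<forall>T\<ge>0. \<forall>e>0. \<forall>\<^sub>F n in sequentially.
            (\<forall>t\<in>{0..T}. \<bar>lam n t - t\<bar> < e \<and> \<bar>fs n (lam n t) - f t\<bar> < e)))"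

definition tau :: "(real \<Rightarrow> real) \<Rightarrow> ereal" where
  "tau f = Inf {ereal t | t. t \<ge> 0 \<and> f t \<le> 0}"

definition tau_lt :: "(real \<Rightarrow> real) \<Rightarrow> ereal" where
  "tau_lt f = Inf {ereal t | t. t \<ge> 0 \<and> f t < 0}"

definition D_star :: "(real \<Rightarrow> real) set" where
  "D_star = {f. cadlag f \<and> (\<forall>t\<ge>0. ereal t \<ge> tau f \<longrightarrow> f t \<le> 0) \<and>
                tau_lt f = tau f \<and> tau f < \<infinity>}"

end

theory Submission
  imports Defs
begin

lemma tau_nonneg: "0 \<le> tau g"
  unfolding tau_def by (rule Inf_greatest) auto

theorem lemma3p3:
  fixes fs :: "nat \<Rightarrow> real \<Rightarrow> real" and f :: "real \<Rightarrow> real"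
  assumes "skorokhod_conv fs f"
    and "continuous_on {0..} f"
    and "f \<in> D_star"
  shows "(\<lambda>n. tau (fs n)) \<longlonglongrightarrow> tau f"
proof -
  from assms(1) obtain lam where tc: "\<And>n. time_change (lam n)"
    and conv: "\<And>T e. T \<ge> 0 \<Longrightarrow> e > 0 \<Longrightarrow> \<forall>\<^sub>F n in sequentially.
            (\<forall>t\<in>{0..T}. \<bar>lam n t - t\<bar> < e \<and> \<bar>fs n (lam n t) - f t\<bar> < e)"
    unfolding skorokhod_conv_def by blast
  have sm: "\<And>n. strict_mono_on {0..} (lam n)" and bj: "\<And>n. bij_betw (lam n) {0..} {0..}"
    using tc unfolding time_change_def by auto
  have tlt: "tau_lt f = tau f" using assms(3) unfolding D_star_def by auto
  show ?thesis
  proof (rule order_tendstoI)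
    fix a assume "a < tau f"
    then obtain r where r: "a < ereal r" "ereal r < tau f" using ereal_dense2 by blast
    then obtain m where m: "ereal r < ereal m" "ereal m < tau f" using ereal_dense2 by blast
    have pos: "f t > 0" if "t \<in> {0..m}" for t
    proof (rule ccontr)
      assume "\<not> f t > 0"
      then have "tau f \<le> ereal t" unfolding tau_def using that by (intro Inf_lower) auto
      then show False using m that by (metis atLeastAtMost_iff ereal_less_eq(3) leD order_le_less_trans)
    qed
    show "\<forall>\<^sub>F n in sequentially. a < tau (fs n)"
    proof (cases "m < 0")
      case True
      then have "ereal r < 0" using r m by auto
      then have "a < 0" using r(1) by (meson less_trans)
      then show ?thesis using tau_nonneg by (metis always_eventually order_less_le_trans)
    next
      case False
      then have ne: "{0..m} \<noteq> {}" by auto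
      have "continuous_on {0..m} f" using assms(2) by (rule continuous_on_subset) auto
      then obtain t0 where t0: "t0 \<in> {0..m}" "\<And>t. t \<in> {0..m} \<Longrightarrow> f t0 \<le> f t"
        using continuous_attains_inf[OF compact_Icc ne] by blast
      define d where "d = f t0"
      have dpos: "d > 0" using pos t0 d_def by auto
      have rm: "r < m" using m by auto
      have ev: "\<forall>\<^sub>F n in sequentially.
            (\<forall>t\<in>{0..m}. \<bar>lam n t - t\<bar> < min (m - r) d \<and> \<bar>fs n (lam n t) - f t\<bar> < min (m - r) d)"
        using conv[of m "min (m - r) d"] False rm dpos by auto
      show ?thesis
      proof (rule eventually_mono[OF ev])
        fix n assume H: "\<forall>t\<in>{0..m}. \<bar>lam n t - t\<bar> < min (m - r) d \<and> \<bar>fs n (lam n t) - f t\<bar> < min (m - r) d"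
        have "m \<in> {0..m}" using False by auto
        then have "\<bar>lam n m - m\<bar> < m - r" using H by auto
        then have lm: "lam n m > r" by auto
        have "ereal (lam n m) \<le> tau (fs n)"
          unfolding tau_def
        proof (rule Inf_greatest)
          fix x assume "x \<in> {ereal t |t. 0 \<le> t \<and> fs n t \<le> 0}"
          then obtain s where s: "x = ereal s" "0 \<le> s" "fs n s \<le> 0" by auto
          have "lam n m \<le> s"
          proof (rule ccontr)
            assume less: "\<not> lam n m \<le> s"
            from s(2) bj[of n] obtain t where t: "t \<ge> 0" "s = lam n t"
              unfolding bij_betw_def by (metis atLeast_iff imageE)
            have "t < m"
            proof (rule ccontr)
              assume "\<not> t < m"
              then have "lam n m \<le> lam n t"
                using strict_mono_on_leD[OF sm[of n]] False t by auto
              then show False using less t by auto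
            qed
            then have tin: "t \<in> {0..m}" using t by auto
            have "fs n (lam n t) > f t - d" using H tin by force
            moreover have "f t \<ge> d" using t0 tin d_def by auto
            ultimately show False using s t by auto
          qed
          then show "ereal (lam n m) \<le> x" using s by auto
        qed
        then show "a < tau (fs n)" using lm r by (meson ereal_less_eq(3) le_less_trans less_le_trans order_less_imp_le)
      qed
    qed
  next
    fix a assume "tau f < a"
    then have "tau_lt f < a" using tlt by simp
    then obtain x where x: "x \<in> {ereal t |t. t \<ge> 0 \<and> f t < 0}" "x < a"
      unfolding tau_lt_def using Inf_less_iff by blast
    then obtain t1 where t1: "x = ereal t1" "t1 \<ge> 0" "f t1 < 0" by auto
    obtain r where r: "ereal t1 < ereal r" "ereal r < a" using x t1 ereal_dense2 by blast
    have rt: "r - t1 > 0" using r by auto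
    have ev: "\<forall>\<^sub>F n in sequentially.
            (\<forall>t\<in>{0..t1}. \<bar>lam n t - t\<bar> < min (r - t1) (- f t1) \<and> \<bar>fs n (lam n t) - f t\<bar> < min (r - t1) (- f t1))"
      using conv[of t1 "min (r - t1) (- f t1)"] t1 rt by auto
    show "\<forall>\<^sub>F n in sequentially. tau (fs n) < a"
    proof (rule eventually_mono[OF ev])
      fix n assume H: "\<forall>t\<in>{0..t1}. \<bar>lam n t - t\<bar> < min (r - t1) (- f t1) \<and> \<bar>fs n (lam n t) - f t\<bar> < min (r - t1) (- f t1)"
      have a1: "lam n t1 < r" and a2: "fs n (lam n t1) < 0" using H t1 by force+
      have a3: "lam n t1 \<ge> 0" using bj[of n] t1 unfolding bij_betw_def by auto
      have "tau (fs n) \<le> ereal (lam n t1)" unfolding tau_def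
        by (rule Inf_lower) (use a2 a3 in auto)
      moreover have "ereal (lam n t1) < ereal r" using a1 by simp
      ultimately show "tau (fs n) < a" using r(2) by (meson le_less_trans less_trans)
    qed
  qed
qed

end
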